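(* Let $\Gamma_1,\Gamma_2,\ldots$ be i.i.d. exponential random variables with mean $\bar\gamma>0$, $\Gamma_{[k]}=\sum_{l=1}^k\Gamma_l$ (with $\Gamma_{[0]}=0$), let $\gamma_{\mathrm{th}}\ge0$, $g>0$ and $$\mathrm{PER}(\gamma)=\begin{cases}1,&\gamma<\gamma_{\mathrm{th}},\\ \exp[-g(\gamma-\gamma_{\mathrm{th}})],&\gamma\ge\gamma_{\mathrm{th}}.\end{cases}$$ Set $\hat f^{\mathrm{avg}}_k=\mathbb{E}[\mathrm{PER}(\Gamma_{[k]})]$ for $k\ge1$ and $\hat f^{\mathrm{avg}}_0=1$. Then $$\bar K:=\sum_{k=0}^\infty \hat f^{\mathrm{avg}}_k=1+\frac{\gamma_{\mathrm{th}}+1/g}{\bar\gamma}.$$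
   Context: $\bar K$ is the average number of rounds of repetition-redundancy HARQ with an unlimited number of rounds in i.i.d. Rayleigh block fading, computed under the deterministic-error model in which the probability of failure after $k$ rounds is $\mathrm{PER}(\Gamma_{[k]})$. *)

theory Defs
  imports "HOL-Probability.Probability"
begin

definition PER :: "real \<Rightarrow> real \<Rightarrow> real \<Rightarrow> real" where
  "PER \<gamma>th g \<gamma> = (if \<gamma> < \<gamma>th then 1 else exp (- g * (\<gamma> - \<gamma>th)))"

definition fhat_avg :: "'a measure \<Rightarrow> (nat \<Rightarrow> 'a \<Rightarrow> real) \<Rightarrow> real \<Rightarrow> real \<Rightarrow> nat \<Rightarrow> real" where
  "fhat_avg M \<Gamma> \<gamma>th g k =
     (if k = 0 then 1 else
        prob_space.expectation M (\<lambda>\<omega>. PER \<gamma>th g (\<Sum>l\<in>{1..k}. \<Gamma> l \<omega>)))"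

end

theory Submission
  imports Defs
begin

lemma PER_meas[measurable]: "PER a g \<in> borel_measurable borel"
  unfolding PER_def by measurable

lemma PER_bounds: "g > 0 \<Longrightarrow> 0 \<le> PER a g x \<and> PER a g x \<le> 1"
  unfolding PER_def by (auto simp: mult_nonneg_nonneg)

lemma series_erlang:
  assumes l: "l > 0"
  shows "(\<Sum>n. ennreal (erlang_density n l x * p)) = ennreal (l * indicator {0..} x * p)"
proof (cases "x < 0")
  case True then show ?thesis by (simp add: erlang_density_def)
next
  case False
  have "(\<lambda>n. (l*x)^n / fact n) sums exp (l*x)"
    using exp_converges[of "l*x"] by (simp add: divide_inverse_commute)
  then have S: "(\<lambda>n. (l * exp (- l * x) * p) * ((l*x)^n / fact n)) sums ((l * exp (- l * x) * p) * exp (l*x))"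
    by (rule sums_mult)
  have e1: "(l * exp (- l * x) * p) * exp (l*x) = l * indicator {0..} x * p"
    using False by (simp add: exp_minus field_simps)
  have e2: "\<And>n. (l * exp (- l * x) * p) * ((l*x)^n / fact n) = erlang_density n l x * p"
    using False by (simp add: erlang_density_def power_mult_distrib field_simps)
  have s: "(\<lambda>n. erlang_density n l x * p) sums (l * indicator {0..} x * p)"
    using S unfolding e1 e2 .
  show ?thesis
  proof (cases "p \<ge> 0")
    case True
    then have "(\<lambda>n. ennreal (erlang_density n l x * p)) sums ennreal (l * indicator {0..} x * p)"
      using s l by (subst sums_ennreal) auto
    then show ?thesis by (rule sums_unique[symmetric])
  next
    case False
    then have "\<And>n. erlang_density n l x * p \<le> 0" using l
      by (simp add: mult_nonneg_nonpos)
    moreover have "l * indicator {0..} x * p \<le> 0" using False l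
      by (simp add: mult_nonneg_nonpos)
    ultimately show ?thesis by (simp add: ennreal_neg)
  qed
qed

lemma integral_exp_shift:
  assumes g: "g > 0"
  shows "(\<integral>\<^sup>+x. ennreal (exp (- g * (x - a))) * indicator {a..} x \<partial>lborel) = ennreal (1 / g)"
proof -
  have "(\<integral>\<^sup>+x. ennreal (exp (- g * (x - a))) * indicator {a..} x \<partial>lborel)
     = \<bar>1/g\<bar> * (\<integral>\<^sup>+x. ennreal (exp (- g * ((a + (1/g) * x) - a))) * indicator {a..} (a + (1/g) * x) \<partial>lborel)"
    using g by (intro nn_integral_real_affine) auto
  also have "(\<integral>\<^sup>+x. ennreal (exp (- g * ((a + (1/g) * x) - a))) * indicator {a..} (a + (1/g) * x) \<partial>lborel)
      = (\<integral>\<^sup>+x. ennreal (x^0 * exp (- x)) * indicator {0..} x \<partial>lborel)"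
    using g by (intro nn_integral_cong) (auto split: split_indicator simp: field_simps)
  also have "\<dots> = 1"
    using nn_intergal_power_times_exp_Ici[of 0] by simp
  finally show ?thesis using g by simp
qed

lemma integral_PER:
  assumes l: "l > 0" and g: "g > 0" and a: "a \<ge> 0"
  shows "(\<integral>\<^sup>+x. ennreal (l * indicator {0..} x * PER a g x) \<partial>lborel) = ennreal (l * (a + 1 / g))"
proof -
  have "(\<integral>\<^sup>+x. ennreal (l * indicator {0..} x * PER a g x) \<partial>lborel)
     = (\<integral>\<^sup>+x. ennreal l * indicator {0..<a} x + ennreal l * (ennreal (exp (- g * (x - a))) * indicator {a..} x) \<partial>lborel)"
    using l a by (intro nn_integral_cong) (auto split: split_indicator simp: PER_def ennreal_mult)
  also have "\<dots> = ennreal l * (\<integral>\<^sup>+x. indicator {0..<a} x \<partial>lborel) + ennreal l * (\<integral>\<^sup>+x. ennreal (exp (- g * (x - a))) * indicator {a..} x \<partial>lborel)"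
    by (subst nn_integral_add) (auto simp: nn_integral_cmult)
  also have "\<dots> = ennreal l * ennreal a + ennreal l * ennreal (1 / g)"
    using a g by (simp only: integral_exp_shift[OF g] nn_integral_indicator sets_lborel atLeastLessThan_borel emeasure_lborel_Ico diff_zero)
  also have "\<dots> = ennreal (l * (a + 1 / g))"
  proof -
    have "ennreal l * ennreal a = ennreal (l*a)" using l a by (intro ennreal_mult[symmetric]) auto
    moreover have "ennreal l * ennreal (1/g) = ennreal (l*(1/g))" using l g by (intro ennreal_mult[symmetric]) auto
    moreover have "ennreal (l*a) + ennreal (l*(1/g)) = ennreal (l*a + l*(1/g))" using l g a by (intro ennreal_plus[symmetric]) auto
    ultimately show ?thesis by (simp only: distrib_left)
  qed
  finally show ?thesis .
qed

lemma fhat_nn: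
  assumes P: "prob_space M" and g: "g > 0" and l: "l > 0"
    and D: "distributed M lborel (\<lambda>\<omega>. \<Sum>i\<in>{1..k}. \<Gamma> i \<omega>) (erlang_density (k - 1) l)"
    and k: "k \<ge> 1"
  shows "ennreal (fhat_avg M \<Gamma> a g k) = (\<integral>\<^sup>+x. ennreal (erlang_density (k - 1) l x * PER a g x) \<partial>lborel)"
    and "fhat_avg M \<Gamma> a g k \<ge> 0"
proof -
  interpret prob_space M by (rule P)
  let ?S = "\<lambda>\<omega>. \<Sum>i\<in>{1..k}. \<Gamma> i \<omega>"
  have Sm[measurable]: "?S \<in> borel_measurable M"
    using distributed_measurable[OF D] by simp
  have PSm: "(\<lambda>\<omega>. PER a g (?S \<omega>)) \<in> borel_measurable M"
    by (rule measurable_compose[OF Sm PER_meas])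
  have int: "integrable M (\<lambda>\<omega>. PER a g (?S \<omega>))"
    by (rule integrable_const_bound[where B=1]) (use PER_bounds[OF g] PSm in auto)
  have fe: "fhat_avg M \<Gamma> a g k = expectation (\<lambda>\<omega>. PER a g (?S \<omega>))"
    using k by (simp add: fhat_avg_def)
  show "fhat_avg M \<Gamma> a g k \<ge> 0"
    unfolding fe by (rule integral_nonneg_AE) (use PER_bounds[OF g] in auto)
  have "ennreal (fhat_avg M \<Gamma> a g k) = (\<integral>\<^sup>+\<omega>. ennreal (PER a g (?S \<omega>)) \<partial>M)"
    unfolding fe by (rule nn_integral_eq_integral[symmetric]) (use int PER_bounds[OF g] in auto)
  also have "\<dots> = (\<integral>\<^sup>+x. ennreal (erlang_density (k - 1) l x) * ennreal (PER a g x) \<partial>lborel)"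
    by (rule distributed_nn_integral[OF D, symmetric]) measurable
  also have "\<dots> = (\<integral>\<^sup>+x. ennreal (erlang_density (k - 1) l x * PER a g x) \<partial>lborel)"
    using l PER_bounds[OF g] by (intro nn_integral_cong) (simp add: ennreal_mult)
  finally show "ennreal (fhat_avg M \<Gamma> a g k) = (\<integral>\<^sup>+x. ennreal (erlang_density (k - 1) l x * PER a g x) \<partial>lborel)" .
qed

theorem mainTheorem8:
  fixes M :: "'a measure" and \<Gamma> :: "nat \<Rightarrow> 'a \<Rightarrow> real"
    and \<gamma>bar \<gamma>th g :: real
  assumes "prob_space M"
    and "\<gamma>bar > 0" and "\<gamma>th \<ge> 0" and "g > 0"
    and "prob_space.indep_vars M (\<lambda>_. borel) \<Gamma> {1..}"
    and "\<And>l. l \<ge> 1 \<Longrightarrow> distributed M lborel (\<Gamma> l) (exponential_density (1 / \<gamma>bar))"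
  shows "(\<lambda>k. fhat_avg M \<Gamma> \<gamma>th g k) sums (1 + (\<gamma>th + 1 / g) / \<gamma>bar)"
proof -
  interpret prob_space M by (rule assms(1))
  define l where "l = 1 / \<gamma>bar"
  have l: "l > 0" using assms(2) by (simp add: l_def)
  have D: "distributed M lborel (\<lambda>\<omega>. \<Sum>i\<in>{1..Suc k}. \<Gamma> i \<omega>) (erlang_density (Suc k - 1) l)" for k
  proof -
    have "distributed M lborel (\<lambda>\<omega>. \<Sum>i\<in>{1..Suc k}. \<Gamma> i \<omega>) (erlang_density (card {1..Suc k} - 1) l)"
      using l assms(6) unfolding l_def[symmetric]
      by (intro exponential_distributed_sum indep_vars_subset[OF assms(5)]) auto
    then show ?thesis by simp
  qed
  have F: "ennreal (fhat_avg M \<Gamma> \<gamma>th g (Suc k)) = (\<integral>\<^sup>+x. ennreal (erlang_density k l x * PER \<gamma>th g x) \<partial>lborel)"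
    and F0: "fhat_avg M \<Gamma> \<gamma>th g (Suc k) \<ge> 0" for k
    using fhat_nn[OF assms(1) assms(4) l D[of k]] by auto
  have "(\<Sum>k. ennreal (fhat_avg M \<Gamma> \<gamma>th g (Suc k))) = (\<Sum>k. (\<integral>\<^sup>+x. ennreal (erlang_density k l x * PER \<gamma>th g x) \<partial>lborel))"
    by (simp only: F)
  also have "\<dots> = (\<integral>\<^sup>+x. (\<Sum>k. ennreal (erlang_density k l x * PER \<gamma>th g x)) \<partial>lborel)"
    by (rule nn_integral_suminf[symmetric]) measurable
  also have "\<dots> = (\<integral>\<^sup>+x. ennreal (l * indicator {0..} x * PER \<gamma>th g x) \<partial>lborel)"
    using l by (simp only: series_erlang)
  also have "\<dots> = ennreal (l * (\<gamma>th + 1 / g))"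
    by (rule integral_PER[OF l assms(4) assms(3)])
  finally have "(\<lambda>k. ennreal (fhat_avg M \<Gamma> \<gamma>th g (Suc k))) sums ennreal (l * (\<gamma>th + 1 / g))"
    using summable_sums[OF summableI] by metis
  then have "(\<lambda>k. fhat_avg M \<Gamma> \<gamma>th g (Suc k)) sums (l * (\<gamma>th + 1 / g))"
    using F0 l assms(3,4) by (subst (asm) sums_ennreal) auto
  then have "(\<lambda>k. fhat_avg M \<Gamma> \<gamma>th g k) sums (l * (\<gamma>th + 1 / g) + fhat_avg M \<Gamma> \<gamma>th g 0)"
    by (simp only: sums_Suc_iff)
  then show ?thesis by (simp add: fhat_avg_def l_def add.commute)
qed

end
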